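(* Let $P\subseteq\mathbb{R}^n$ be a nonempty integral polyhedron of dimension smaller than $n$ such that no integer point lies in the relative interior of $P$. Then for each $k\in\mathbb{N}$ there exists a relaxation $Q$ of $P$ such that $Q^{(k)}$ is not contained in $\operatorname{aff}(P)$.
   Context: For a polyhedron $Q\subseteq\mathbb{R}^n$, $Q_I:=\operatorname{conv}(Q\cap\mathbb{Z}^n)$; $Q$ is integral if $Q=Q_I$. A relaxation of an integral polyhedron $P\subseteq\mathbb{R}^n$ is a rational polyhedron $Q\subseteq\mathbb{R}^n$ with $Q\cap\mathbb{Z}^n=P\cap\mathbb{Z}^n$. A CG inequality for $Q$ is $cx\le\lfloor\delta\rfloor$ with $c\in\mathbb{Z}^n$ and $cx\le\delta$ valid for $Q$. The CG closure $Q'$ is the set of points of $Q$ satisfying all CG inequalities for $Q$; $Q^{(0)}:=Q$, $Q^{(k)}:=(Q^{(k-1)})'$. $\operatorname{aff}(S)$ is the affine hull of $S$. *)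

theory Defs
  imports "HOL-Analysis.Analysis"
begin

definition int_vec :: "real^'n \<Rightarrow> bool" where
  "int_vec x \<longleftrightarrow> (\<forall>i. x $ i \<in> \<int>)"

definition int_points :: "(real^'n) set" where
  "int_points = {x. int_vec x}"

definition rational_polyhedron :: "(real^'n) set \<Rightarrow> bool" where
  "rational_polyhedron Q \<longleftrightarrow>
     (\<exists>F. finite F \<and> (\<forall>(a,b)\<in>F. (\<forall>i. a $ i \<in> \<rat>) \<and> b \<in> \<rat>) \<and>
          Q = {x. \<forall>(a,b)\<in>F. a \<bullet> x \<le> b})"

definition integer_hull :: "(real^'n) set \<Rightarrow> (real^'n) set" where
  "integer_hull Q = convex hull (Q \<inter> int_points)"

definition integral_polyhedron :: "(real^'n) set \<Rightarrow> bool" where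
  "integral_polyhedron P \<longleftrightarrow> polyhedron P \<and> P = integer_hull P"

definition relaxation :: "(real^'n) set \<Rightarrow> (real^'n) set \<Rightarrow> bool" where
  "relaxation P Q \<longleftrightarrow> rational_polyhedron Q \<and> Q \<inter> int_points = P \<inter> int_points"

definition cg_closure :: "(real^'n) set \<Rightarrow> (real^'n) set" where
  "cg_closure Q = {x \<in> Q. \<forall>c \<delta>. int_vec c \<and> (\<forall>y\<in>Q. c \<bullet> y \<le> \<delta>)
                              \<longrightarrow> c \<bullet> x \<le> of_int \<lfloor>\<delta>\<rfloor>}"

definition cg_iter :: "nat \<Rightarrow> (real^'n) set \<Rightarrow> (real^'n) set" where
  "cg_iter k Q = (cg_closure ^^ k) Q"

end

theory Submission
  imports Defs
begin

definition rat_vec :: "real^'n \<Rightarrow> bool" where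
  "rat_vec x \<longleftrightarrow> (\<forall>i. x $ i \<in> \<rat>)"

lemma int_vec_rat_vec: "int_vec x \<Longrightarrow> rat_vec x"
  unfolding int_vec_def rat_vec_def using Ints_subset_Rats by blast

lemma rat_vec_add: "rat_vec x \<Longrightarrow> rat_vec y \<Longrightarrow> rat_vec (x + y)"
  unfolding rat_vec_def by auto
lemma rat_vec_diff: "rat_vec x \<Longrightarrow> rat_vec y \<Longrightarrow> rat_vec (x - y)"
  unfolding rat_vec_def by auto
lemma rat_vec_neg: "rat_vec x \<Longrightarrow> rat_vec (- x)"
  unfolding rat_vec_def by auto
lemma rat_vec_scale: "c \<in> \<rat> \<Longrightarrow> rat_vec x \<Longrightarrow> rat_vec (c *\<^sub>R x)"
  unfolding rat_vec_def by auto
lemma rat_vec_inner: "rat_vec x \<Longrightarrow> rat_vec y \<Longrightarrow> x \<bullet> y \<in> \<rat>"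
  unfolding rat_vec_def inner_vec_def by (auto intro!: Rats_sum)

lemma int_vec_add: "int_vec x \<Longrightarrow> int_vec y \<Longrightarrow> int_vec (x + y)"
  unfolding int_vec_def by auto
lemma int_vec_diff: "int_vec x \<Longrightarrow> int_vec y \<Longrightarrow> int_vec (x - y)"
  unfolding int_vec_def by auto
lemma int_vec_scale: "c \<in> \<int> \<Longrightarrow> int_vec x \<Longrightarrow> int_vec (c *\<^sub>R x)"
  unfolding int_vec_def by auto
lemma int_vec_inner: "int_vec x \<Longrightarrow> int_vec y \<Longrightarrow> x \<bullet> y \<in> \<int>"
  unfolding int_vec_def inner_vec_def by (auto intro!: Ints_sum)

lemma orth_span:
  assumes "\<forall>b\<in>B. d \<bullet> b = 0" "x \<in> span B"
  shows "d \<bullet> x = 0"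
  using orthogonal_to_span[OF assms(2), of d] assms(1) unfolding orthogonal_def by blast

lemma proj_rat:
  assumes "finite B" "\<forall>b\<in>B. rat_vec b"
  shows "\<forall>u. rat_vec u \<longrightarrow> (\<exists>p. rat_vec p \<and> p \<in> span B \<and> (\<forall>b\<in>B. (u - p) \<bullet> b = 0))"
  using assms
proof (induction B rule: finite_induct)
  case empty
  then show ?case by (auto intro!: exI[of _ 0] simp: rat_vec_def)
next
  case (insert s B)
  then have IH: "\<And>u. rat_vec u \<Longrightarrow> \<exists>p. rat_vec p \<and> p \<in> span B \<and> (\<forall>b\<in>B. (u - p) \<bullet> b = 0)"
    by auto
  have rs: "rat_vec s" using insert by auto
  obtain ps where ps: "rat_vec ps" "ps \<in> span B" "\<forall>b\<in>B. (s - ps) \<bullet> b = 0"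
    using IH[OF rs] by blast
  define s' where "s' = s - ps"
  have rs': "rat_vec s'" using rs ps by (simp add: s'_def rat_vec_diff)
  have s'B: "\<forall>b\<in>B. s' \<bullet> b = 0" using ps s'_def by auto
  show ?case
  proof (intro allI impI)
    fix u :: "real^'a" assume ru: "rat_vec u"
    obtain p' where p': "rat_vec p'" "p' \<in> span B" "\<forall>b\<in>B. (u - p') \<bullet> b = 0"
      using IH[OF ru] by blast
    define d where "d = u - p'"
    have dB: "\<forall>b\<in>B. d \<bullet> b = 0" using p' d_def by auto
    have dps: "d \<bullet> ps = 0" using orth_span[OF dB ps(2)] .
    have s'ps: "s' \<bullet> ps = 0" using orth_span[OF s'B ps(2)] .
    show "\<exists>p. rat_vec p \<and> p \<in> span (insert s B) \<and> (\<forall>b\<in>insert s B. (u - p) \<bullet> b = 0)"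
    proof (cases "s' = 0")
      case True
      then have "s = ps" using s'_def by simp
      then show ?thesis using p' dps d_def
        using span_mono[of B "insert s B"] by (intro exI[of _ p']) auto
    next
      case False
      define c where "c = (d \<bullet> s') / (s' \<bullet> s')"
      have ss: "s' \<bullet> s' \<noteq> 0" using False by simp
      have rc: "c \<in> \<rat>" unfolding c_def d_def
        using rat_vec_inner[OF rat_vec_diff[OF ru p'(1)] rs'] rat_vec_inner[OF rs' rs'] by auto
      have sp: "s' \<in> span (insert s B)"
        unfolding s'_def by (meson ps(2) span_base span_diff span_mono insertI1 subset_insertI subsetD)
      have p'sp: "p' \<in> span (insert s B)"
        using p'(2) span_mono[of B "insert s B"] by auto
      show ?thesis
      proof (intro exI[of _ "p' + c *\<^sub>R s'"] conjI)
        show "rat_vec (p' + c *\<^sub>R s')" by (intro rat_vec_add p'(1) rat_vec_scale rc rs')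
        show "p' + c *\<^sub>R s' \<in> span (insert s B)" using sp p'sp by (simp add: span_add span_scale)
        have e: "u - (p' + c *\<^sub>R s') = d - c *\<^sub>R s'" by (simp add: d_def)
        have "(d - c *\<^sub>R s') \<bullet> s = (d - c *\<^sub>R s') \<bullet> (s' + ps)" by (simp add: s'_def)
        also have "\<dots> = d \<bullet> s' - c * (s' \<bullet> s')" using dps s'ps
          by (simp add: inner_diff_left inner_add_right)
        also have "\<dots> = 0" using ss by (simp add: c_def)
        finally have "(d - c *\<^sub>R s') \<bullet> s = 0" .
        then show "\<forall>b\<in>insert s B. (u - (p' + c *\<^sub>R s')) \<bullet> b = 0"
          using dB s'B by (auto simp: e inner_diff_left)
      qed
    qed
  qed
qed

lemma int_le_floor: "x \<in> \<int> \<Longrightarrow> x \<le> d \<Longrightarrow> x \<le> of_int \<lfloor>d\<rfloor>"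
  by (metis Ints_cases le_floor_iff of_int_le_iff)

lemma cg_subset: "cg_closure R \<subseteq> R"
  unfolding cg_closure_def by auto

lemma convex_cg: assumes "convex R" shows "convex (cg_closure R)"
proof (rule convexI)
  fix x y :: "real^'a" and u v :: real
  assume x: "x \<in> cg_closure R" and y: "y \<in> cg_closure R" and uv: "0 \<le> u" "0 \<le> v" "u + v = 1"
  show "u *\<^sub>R x + v *\<^sub>R y \<in> cg_closure R"
    unfolding cg_closure_def
  proof (simp only: mem_Collect_eq, intro conjI allI impI)
    show "u *\<^sub>R x + v *\<^sub>R y \<in> R" using assms x y uv cg_subset by (meson convexD subsetD)
    fix c \<delta> assume h: "int_vec c \<and> (\<forall>y\<in>R. c \<bullet> y \<le> \<delta>)"
    have a: "c \<bullet> x \<le> of_int \<lfloor>\<delta>\<rfloor>" using x h unfolding cg_closure_def by blast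
    have b: "c \<bullet> y \<le> of_int \<lfloor>\<delta>\<rfloor>" using y h unfolding cg_closure_def by blast
    have "u * (c \<bullet> x) + v * (c \<bullet> y) \<le> u * of_int \<lfloor>\<delta>\<rfloor> + v * of_int \<lfloor>\<delta>\<rfloor>"
      using a b uv by (intro add_mono mult_left_mono) auto
    also have "\<dots> = of_int \<lfloor>\<delta>\<rfloor>" using uv by (simp flip: distrib_right)
    finally show "c \<bullet> (u *\<^sub>R x + v *\<^sub>R y) \<le> of_int \<lfloor>\<delta>\<rfloor>" by (simp add: inner_add_right)
  qed
qed

lemma integral_in_cg:
  assumes "P = integer_hull P" "P \<subseteq> R"
  shows "P \<subseteq> cg_closure R"
proof
  fix x assume xP: "x \<in> P"
  show "x \<in> cg_closure R"
    unfolding cg_closure_def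
  proof (simp only: mem_Collect_eq, intro conjI allI impI)
    show "x \<in> R" using xP assms by auto
    fix c \<delta> assume h: "int_vec c \<and> (\<forall>y\<in>R. c \<bullet> y \<le> \<delta>)"
    have "P \<inter> int_points \<subseteq> {y. c \<bullet> y \<le> of_int \<lfloor>\<delta>\<rfloor>}"
    proof
      fix p assume p: "p \<in> P \<inter> int_points"
      have "c \<bullet> p \<in> \<int>" using p h int_vec_inner by (auto simp: int_points_def)
      moreover have "c \<bullet> p \<le> \<delta>" using p h assms by auto
      ultimately show "p \<in> {y. c \<bullet> y \<le> of_int \<lfloor>\<delta>\<rfloor>}" using int_le_floor by auto
    qed
    then have "convex hull (P \<inter> int_points) \<subseteq> {y. c \<bullet> y \<le> of_int \<lfloor>\<delta>\<rfloor>}"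
      by (intro hull_minimal) (auto simp: convex_halfspace_le)
    moreover have "x \<in> convex hull (P \<inter> int_points)"
      using xP assms(1) unfolding integer_hull_def by auto
    ultimately show "c \<bullet> x \<le> of_int \<lfloor>\<delta>\<rfloor>" by auto
  qed
qed

lemma cg_step:
  assumes int: "P = integer_hull P" and conv: "convex R" and PR: "P \<subseteq> R" and z: "z \<in> P"
    and w: "int_vec w" and j: "j \<ge> 1" and zj: "z + real j *\<^sub>R w \<in> R"
  shows "convex (cg_closure R) \<and> P \<subseteq> cg_closure R \<and> z + real (j - 1) *\<^sub>R w \<in> cg_closure R"
proof (intro conjI)
  show "convex (cg_closure R)" using conv convex_cg by blast
  show PC: "P \<subseteq> cg_closure R" using integral_in_cg[OF int PR] .
  have zR: "z \<in> R" using z PR by auto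
  have c1: "(1 - 1 / real j) * real j = real (j - 1)" using j by (simp add: field_simps of_nat_diff)
  have c2: "1 / real j + (1 - 1 / real j) = 1" by simp
  have "(1 / real j) *\<^sub>R z + (1 - 1 / real j) *\<^sub>R (z + real j *\<^sub>R w)
       = (1 / real j + (1 - 1 / real j)) *\<^sub>R z + ((1 - 1 / real j) * real j) *\<^sub>R w"
    by (simp only: scaleR_add_right scaleR_add_left scaleR_scaleR add.assoc)
  then have eq: "z + real (j - 1) *\<^sub>R w = (1 / real j) *\<^sub>R z + (1 - 1 / real j) *\<^sub>R (z + real j *\<^sub>R w)"
    unfolding c1 c2 by simp
  have inR: "z + real (j - 1) *\<^sub>R w \<in> R"
    unfolding eq using conv zR zj j by (intro convexD) (auto simp: field_simps)
  show "z + real (j - 1) *\<^sub>R w \<in> cg_closure R"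
    unfolding cg_closure_def
  proof (simp only: mem_Collect_eq, intro conjI allI impI)
    show "z + real (j - 1) *\<^sub>R w \<in> R" using inR .
    fix c \<delta> assume h: "int_vec c \<and> (\<forall>y\<in>R. c \<bullet> y \<le> \<delta>)"
    have cz: "c \<bullet> z \<le> of_int \<lfloor>\<delta>\<rfloor>" using PC z h unfolding cg_closure_def by auto
    have cw: "c \<bullet> w \<in> \<int>" using h w int_vec_inner by blast
    show "c \<bullet> (z + real (j - 1) *\<^sub>R w) \<le> of_int \<lfloor>\<delta>\<rfloor>"
    proof (cases "c \<bullet> w \<le> 0")
      case True
      then have "real (j - 1) * (c \<bullet> w) \<le> 0" by (simp add: mult_nonneg_nonpos)
      then show ?thesis using cz by (simp add: inner_add_right)
    next
      case False
      then have "c \<bullet> w \<ge> 1" using cw by (metis Ints_cases int_one_le_iff_zero_less not_le of_int_le_iff of_int_0_less_iff of_int_1)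
      moreover have "c \<bullet> (z + real j *\<^sub>R w) \<le> \<delta>" using h zj by blast
      moreover have "\<delta> - 1 < of_int \<lfloor>\<delta>\<rfloor>" by linarith
      ultimately show ?thesis using j by (simp add: inner_add_right of_nat_diff algebra_simps)
    qed
  qed
qed

lemma cg_iter_Suc: "cg_iter (Suc m) Q = cg_closure (cg_iter m Q)"
  unfolding cg_iter_def by simp

lemma cg_iter_main:
  assumes int: "P = integer_hull P" and conv: "convex Q" and PQ: "P \<subseteq> Q" and z: "z \<in> P"
    and w: "int_vec w" and zs: "z + real s *\<^sub>R w \<in> Q"
  shows "m \<le> s \<Longrightarrow> convex (cg_iter m Q) \<and> P \<subseteq> cg_iter m Q \<and> z + real (s - m) *\<^sub>R w \<in> cg_iter m Q"
proof (induction m)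
  case 0
  then show ?case using assms by (simp add: cg_iter_def)
next
  case (Suc m)
  then have IH: "convex (cg_iter m Q) \<and> P \<subseteq> cg_iter m Q \<and> z + real (s - m) *\<^sub>R w \<in> cg_iter m Q" by simp
  have "convex (cg_closure (cg_iter m Q)) \<and> P \<subseteq> cg_closure (cg_iter m Q) \<and>
        z + real (s - m - 1) *\<^sub>R w \<in> cg_closure (cg_iter m Q)"
    using cg_step[OF int _ _ z w _ , of "cg_iter m Q" "s - m"] IH Suc.prems by auto
  then show ?case by (simp add: cg_iter_Suc)
qed

lemma common_denom:
  assumes "rat_vec (r::real^'n)"
  shows "\<exists>D::int. D > 0 \<and> int_vec (of_int D *\<^sub>R r)"
proof -
  have "\<forall>i. \<exists>d::int. d > 0 \<and> of_int d * r$i \<in> \<int>"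
  proof
    fix i
    have "r$i \<in> \<rat>" using assms unfolding rat_vec_def by auto
    then obtain a b where ab: "b > 0" "r$i = of_int a / of_int b"
      by (metis Rats_cases')
    then show "\<exists>d::int. d > 0 \<and> of_int d * r$i \<in> \<int>"
      by (intro exI[of _ b]) auto
  qed
  then obtain d where d: "\<And>i. d i > (0::int) \<and> of_int (d i) * r$i \<in> \<int>" by metis
  define D where "D = (\<Prod>i\<in>UNIV. d i)"
  have "D > 0" unfolding D_def using d by (simp add: prod_pos)
  moreover have "int_vec (of_int D *\<^sub>R r)"
    unfolding int_vec_def
  proof
    fix i
    have "D = d i * (\<Prod>j\<in>UNIV-{i}. d j)" unfolding D_def
      by (simp add: prod.remove)
    then have "(of_int D *\<^sub>R r) $ i = of_int (\<Prod>j\<in>UNIV-{i}. d j) * (of_int (d i) * r$i)"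
      by (simp add: ac_simps)
    then show "(of_int D *\<^sub>R r) $ i \<in> \<int>" using d by (metis Ints_mult Ints_of_int)
  qed
  ultimately show ?thesis by blast
qed

lemma primitive_int:
  assumes g: "int_vec (g::real^'n)" and nz: "g \<noteq> 0"
  shows "\<exists>m::nat. m > 0 \<and> int_vec ((1 / real m) *\<^sub>R g) \<and> (\<exists>w. int_vec w \<and> g \<bullet> w = real m)"
proof -
  define M where "M = {k::nat. k > 0 \<and> (\<exists>w. int_vec w \<and> g \<bullet> w = real k)}"
  obtain i where gi: "g $ i \<noteq> 0" using nz by (metis vec_eq_iff zero_index)
  obtain a where a: "g $ i = of_int a" using g unfolding int_vec_def by (metis Ints_cases)
  define w0 where "w0 = (if a > 0 then 1 else -1) *\<^sub>R axis i (1::real)"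
  have "int_vec w0" unfolding w0_def int_vec_def axis_def by auto
  moreover have "g \<bullet> w0 = real (nat \<bar>a\<bar>)"
    unfolding w0_def using gi a by (auto simp: inner_axis)
  moreover have "nat \<bar>a\<bar> > 0" using gi a by auto
  ultimately have "nat \<bar>a\<bar> \<in> M" unfolding M_def by blast
  define m where "m = (LEAST k. k \<in> M)"
  have mM: "m \<in> M" unfolding m_def using \<open>nat \<bar>a\<bar> \<in> M\<close> by (rule LeastI)
  have mmin: "\<And>k. k \<in> M \<Longrightarrow> m \<le> k" unfolding m_def by (rule Least_le)
  obtain w where w: "int_vec w" "g \<bullet> w = real m" and m0: "m > 0" using mM unfolding M_def by blast
  have "int_vec ((1 / real m) *\<^sub>R g)"
    unfolding int_vec_def
  proof
    fix j
    obtain b where b: "g $ j = of_int b" using g unfolding int_vec_def by (metis Ints_cases)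
    define q where "q = b div int m"
    define r where "r = b mod int m"
    have br: "b = q * int m + r" unfolding q_def r_def by simp
    have r0: "0 \<le> r" "r < int m" unfolding r_def using m0 by auto
    define w' where "w' = axis j (1::real) - of_int q *\<^sub>R w"
    have "int_vec w'" unfolding w'_def
      by (intro int_vec_diff int_vec_scale w(1)) (auto simp: int_vec_def axis_def)
    moreover have "g \<bullet> w' = of_int r"
      unfolding w'_def using w(2) b br by (simp add: inner_diff_right inner_axis)
    ultimately have "r > 0 \<Longrightarrow> nat r \<in> M" unfolding M_def by auto
    then have "r = 0" using mmin r0 by (metis nat_less_iff not_le not_less_iff_gr_or_eq)
    then show "((1 / real m) *\<^sub>R g) $ j \<in> \<int>" using b br m0 by simp
  qed
  then show ?thesis using w m0 by blast
qed

lemma primitive_rat: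
  assumes "rat_vec (r::real^'n)" "r \<noteq> 0"
  shows "\<exists>g w c. int_vec g \<and> int_vec w \<and> g \<bullet> w = 1 \<and> c \<noteq> 0 \<and> g = c *\<^sub>R r"
proof -
  obtain D where D: "D > 0" "int_vec (of_int D *\<^sub>R r)" using common_denom[OF assms(1)] by blast
  have "of_int D *\<^sub>R r \<noteq> 0" using D assms by simp
  then obtain m w where m: "m > 0" "int_vec ((1 / real m) *\<^sub>R (of_int D *\<^sub>R r))"
     "int_vec w" "(of_int D *\<^sub>R r) \<bullet> w = real m"
    using primitive_int[OF D(2)] by blast
  show ?thesis
    apply (rule exI[of _ "(1 / real m) *\<^sub>R (of_int D *\<^sub>R r)"], rule exI[of _ w], rule exI[of _ "of_int D / real m"])
    using m D by auto
qed

lemma face_hull_sub: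
  fixes S :: "(real^'n) set"
  assumes T: "T face_of convex hull S"
  shows "T \<subseteq> convex hull (S \<inter> T)"
proof
  fix x assume xT: "x \<in> T"
  then have "x \<in> convex hull S" using T face_of_imp_subset by blast
  then obtain S' where S': "finite S'" "S' \<subseteq> S" "x \<in> convex hull S'"
    using caratheodory[of S] by auto
  have sub: "convex hull S' \<subseteq> convex hull S" using S'(2) by (rule hull_mono)
  have "(T \<inter> convex hull S') face_of convex hull S'"
    unfolding face_of_def
  proof (intro conjI ballI impI)
    show "T \<inter> convex hull S' \<subseteq> convex hull S'" by blast
    show "convex (T \<inter> convex hull S')" using T face_of_imp_convex[OF T] by (simp add: convex_Int)
    fix a b y assume a: "a \<in> convex hull S'" and b: "b \<in> convex hull S'" and y: "y \<in> T \<inter> convex hull S'"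
      and yab: "y \<in> open_segment a b"
    have "a \<in> convex hull S" "b \<in> convex hull S" "y \<in> T" using a b y sub by auto
    then have "a \<in> T \<and> b \<in> T" using T yab unfolding face_of_def by blast
    then show "a \<in> T \<inter> convex hull S'" "b \<in> T \<inter> convex hull S'" using a b by auto
  qed
  then obtain S'' where S'': "S'' \<subseteq> S'" "T \<inter> convex hull S' = convex hull S''"
    using face_of_convex_hull_subset[of S' "T \<inter> convex hull S'"] S'(1) finite_imp_compact by blast
  have "S'' \<subseteq> convex hull S''" by (rule hull_subset)
  then have "S'' \<subseteq> T" using S''(2) by auto
  then have "S'' \<subseteq> S \<inter> T" using S''(1) S'(2) by blast
  moreover have "x \<in> convex hull S''" using S''(2) S'(3) xT by blast
  ultimately show "x \<in> convex hull (S \<inter> T)" using hull_mono[of S'' "S \<inter> T" convex] by auto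
qed

lemma finite_rat_basis:
  assumes "\<forall>v\<in>V. rat_vec (v::real^'n)"
  obtains B where "finite B" "B \<subseteq> V" "\<forall>b\<in>B. rat_vec b" "span B = span V"
proof -
  obtain B where B: "B \<subseteq> V" "independent B" "V \<subseteq> span B"
    using maximal_independent_subset by blast
  have "span B \<subseteq> span V" using B(1) by (rule span_mono)
  moreover have "span V \<subseteq> span B" using B(3) by (simp add: span_minimal)
  ultimately have "span B = span V" by (rule subset_antisym)
  moreover have "finite B" using B(2) by (rule finiteI_independent)
  ultimately show ?thesis using that B assms by blast
qed

lemma aff_dim_dim_sub:
  fixes S :: "(real^'n) set"
  assumes "t \<in> S"
  shows "aff_dim (convex hull S) = int (dim (span ((\<lambda>x. x - t) ` S)))"
proof -
  have "t \<in> affine hull S" using assms by (rule hull_inc)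
  then have "aff_dim S = int (dim ((\<lambda>x. x - t) ` S))" by (rule aff_dim_eq_dim_subtract)
  then show ?thesis by (simp add: aff_dim_convex_hull)
qed

lemma facet_rat:
  fixes S :: "(real^'n) set"
  assumes PS: "P = convex hull S" and Sint: "S \<subseteq> int_points" and q: "q \<in> S"
    and L: "L = span ((\<lambda>x. x - q) ` S)"
    and B: "finite B" "\<forall>b\<in>B. rat_vec b" "span B = L"
    and T: "T facet_of P" and Ta: "T \<subseteq> {x. a \<bullet> x = b}" and aL: "a \<in> L" and a0: "a \<noteq> 0"
  shows "\<exists>a' b' lam. rat_vec a' \<and> b' \<in> \<rat> \<and> lam > 0 \<and> (\<forall>x. a' \<bullet> x - b' = lam * (a \<bullet> x - b))"
proof -
  define ST where "ST = S \<inter> T"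
  have Tface: "T face_of convex hull S" using T PS facet_of_imp_face_of by blast
  have TST: "T \<subseteq> convex hull ST" unfolding ST_def using face_hull_sub[OF Tface] .
  have STT: "ST \<subseteq> T" unfolding ST_def by blast
  have Tne: "T \<noteq> {}" using T facet_of_def by blast
  then obtain t where tST: "t \<in> ST" using TST by fastforce
  have tint: "int_vec t" using tST Sint unfolding ST_def int_points_def by blast
  define LT where "LT = span ((\<lambda>x. x - t) ` ST)"
  have hullT: "convex hull ST = T"
    using TST hull_minimal[of ST T convex, OF STT face_of_imp_convex[OF Tface]] by (rule subset_antisym[rotated])
  have dimT: "aff_dim T = int (dim LT)"
    unfolding LT_def using aff_dim_dim_sub[OF tST] hullT by simp
  have dimP: "aff_dim P = int (dim L)"
    unfolding L PS using aff_dim_dim_sub[OF q] by simp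
  have dims: "dim LT + 1 = dim L" using T dimT dimP unfolding facet_of_def by linarith
  have LTL: "LT \<subseteq> L"
    unfolding LT_def L
  proof (rule span_minimal)
    show "(\<lambda>x. x - t) ` ST \<subseteq> span ((\<lambda>x. x - q) ` S)"
    proof
      fix y assume "y \<in> (\<lambda>x. x - t) ` ST"
      then obtain x where x: "x \<in> ST" "y = x - t" by blast
      have "x - q \<in> span ((\<lambda>x. x - q) ` S)" "t - q \<in> span ((\<lambda>x. x - q) ` S)"
        using x tST unfolding ST_def by (auto intro: span_base)
      then have "(x - q) - (t - q) \<in> span ((\<lambda>x. x - q) ` S)" by (rule span_diff)
      then show "y \<in> span ((\<lambda>x. x - q) ` S)" using x by simp
    qed
  qed simp
  have ratST: "\<forall>v\<in>(\<lambda>x. x - t) ` ST. rat_vec v"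
    using Sint tint unfolding ST_def int_points_def
    by (auto intro!: int_vec_rat_vec int_vec_diff)
  obtain BT where BT: "finite BT" "\<forall>b\<in>BT. rat_vec b" "span BT = LT"
    using finite_rat_basis[OF ratST] unfolding LT_def by metis
  have "\<not> B \<subseteq> LT"
  proof
    assume "B \<subseteq> LT"
    then have "span B \<subseteq> LT" unfolding LT_def by (rule span_minimal) simp
    then have "L \<subseteq> LT" using B(3) by simp
    then have "dim L \<le> dim LT" by (rule dim_subset)
    then show False using dims by linarith
  qed
  then obtain u where u: "u \<in> B" "u \<notin> LT" by blast
  have ru: "rat_vec u" using u B by blast
  obtain p where p: "rat_vec p" "p \<in> span BT" "\<forall>y\<in>BT. (u - p) \<bullet> y = 0"
    using proj_rat[OF BT(1,2)] ru by blast
  define a' where "a' = u - p"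
  have ra': "rat_vec a'" unfolding a'_def using ru p by (simp add: rat_vec_diff)
  have pLT: "p \<in> LT" using p BT by simp
  have a'LT: "\<forall>y\<in>LT. a' \<bullet> y = 0" using p(3) BT(3) orth_span unfolding a'_def by metis
  have a'L: "a' \<in> L" unfolding a'_def using u B pLT LTL
    using span_base[OF u(1)] B(3) pLT LTL subspace_diff[of L u p] by (auto simp: L)
  have a'0: "a' \<noteq> 0" using u pLT unfolding a'_def by auto
  have aLT: "\<forall>y\<in>LT. a \<bullet> y = 0"
  proof -
    have "\<forall>y\<in>(\<lambda>x. x - t) ` ST. a \<bullet> y = 0"
      using Ta STT tST by (auto simp: inner_diff_right)
    then show ?thesis unfolding LT_def using orth_span by blast
  qed
  have subLT: "subspace LT" unfolding LT_def by simp
  have anLT: "a \<notin> LT" using aLT a0 by auto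
  have "dim (insert a LT) = dim LT + 1"
  proof -
    have "span LT = LT" using subLT by simp
    then show ?thesis using anLT by (simp add: dim_insert del: span_eq_iff)
  qed
  then have "span (insert a LT) = span L"
    using aL LTL dims by (intro dim_eq_span) auto
  then have spanL: "span (insert a LT) = L" using B(3) by (simp add: L span_span)
  define \<mu> where "\<mu> = (a' \<bullet> a) / (a \<bullet> a)"
  define d where "d = a' - \<mu> *\<^sub>R a"
  have aa: "a \<bullet> a \<noteq> 0" using a0 by simp
  have da: "d \<bullet> a = 0" using aa unfolding d_def \<mu>_def by (simp add: inner_diff_left)
  have dLT: "\<forall>y\<in>LT. d \<bullet> y = 0" using a'LT aLT unfolding d_def by (simp add: inner_diff_left)
  have dins: "\<forall>y\<in>insert a LT. d \<bullet> y = 0" using da dLT by blast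
  have dL: "d \<in> L" unfolding d_def using a'L aL by (simp add: L span_diff span_scale)
  have "d \<bullet> d = 0" using orth_span[OF dins] dL spanL by blast
  then have "d = 0" by simp
  then have a'eq: "a' = \<mu> *\<^sub>R a" unfolding d_def by simp
  then have mu0: "\<mu> \<noteq> 0" using a'0 by auto
  define sg where "sg = (if \<mu> > 0 then 1 else -1::real)"
  have at: "a \<bullet> t = b" using Ta STT tST by blast
  show ?thesis
  proof (intro exI conjI)
    show "rat_vec (sg *\<^sub>R a')" unfolding sg_def using ra' by (simp add: rat_vec_neg)
    show "(sg *\<^sub>R a') \<bullet> t \<in> \<rat>"
      using rat_vec_inner[OF _ int_vec_rat_vec[OF tint]] ra' unfolding sg_def by (simp add: rat_vec_neg)
    show "sg * \<mu> > 0" unfolding sg_def using mu0 by auto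
    show "\<forall>x. (sg *\<^sub>R a') \<bullet> x - (sg *\<^sub>R a') \<bullet> t = (sg * \<mu>) * (a \<bullet> x - b)"
      using at unfolding a'eq by (simp add: algebra_simps)
  qed
qed

lemma rat_vec_sum: "finite A \<Longrightarrow> (\<forall>x\<in>A. rat_vec (f x)) \<Longrightarrow> rat_vec (sum f A)"
  by (induction A rule: finite_induct) (auto simp: rat_vec_add, simp add: rat_vec_def)

lemma affP_char:
  fixes S :: "(real^'n) set"
  assumes q: "q \<in> S"
  shows "x \<in> affine hull (convex hull S) \<longleftrightarrow> x - q \<in> span ((\<lambda>x. x - q) ` S)"
proof -
  have "q \<in> affine hull S" using q by (rule hull_inc)
  then have e: "affine hull S = (\<lambda>x. q + x) ` span ((\<lambda>x. -q + x) ` S)" by (rule affine_hull_span_gen)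
  have f: "(\<lambda>x. -q + x) = (\<lambda>x. x - q)" by auto
  show ?thesis unfolding affine_hull_convex_hull e f
    by (auto simp: image_iff) (metis add.commute diff_add_cancel)
qed

lemma rational_description:
  fixes P :: "(real^'n) set"
  assumes poly: "polyhedron P" and PS: "P = convex hull S" and Sint: "S \<subseteq> int_points" and q: "q \<in> S"
    and dim: "aff_dim P < int CARD('n)"
  shows "\<exists>Geq Gin z r. finite Geq \<and> finite Gin \<and> (\<forall>(a,b)\<in>Geq \<union> Gin. rat_vec a \<and> b \<in> \<rat>)
     \<and> P = {x. \<forall>(a,b)\<in>Geq \<union> Gin. a \<bullet> x \<le> b}
     \<and> (\<forall>(a,b)\<in>Geq. \<forall>x\<in>affine hull P. a \<bullet> x \<le> b)
     \<and> rat_vec z \<and> z \<in> P \<and> (\<forall>(a,b)\<in>Gin. a \<bullet> z < b)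
     \<and> rat_vec r \<and> r \<noteq> 0 \<and> (\<forall>x\<in>P. r \<bullet> x = r \<bullet> q)"
proof -
  define L where "L = span ((\<lambda>x. x - q) ` S)"
  have qint: "int_vec q" using q Sint unfolding int_points_def by blast
  have ratV: "\<forall>v\<in>(\<lambda>x. x - q) ` S. rat_vec v"
    using Sint qint unfolding int_points_def by (auto intro!: int_vec_rat_vec int_vec_diff)
  obtain B where B: "finite B" "\<forall>b\<in>B. rat_vec b" "span B = L"
    using finite_rat_basis[OF ratV] unfolding L_def by metis
  have affP: "\<And>x. x \<in> affine hull P \<longleftrightarrow> x - q \<in> L"
    unfolding PS L_def using affP_char[OF q] by blast
  have "\<forall>i. \<exists>p. rat_vec p \<and> p \<in> span B \<and> (\<forall>b\<in>B. (axis i 1 - p) \<bullet> b = 0)"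
    using proj_rat[OF B(1,2)] by (auto simp: rat_vec_def axis_def)
  then obtain pr where pr: "\<And>i. rat_vec (pr i) \<and> pr i \<in> L \<and> (\<forall>b\<in>B. (axis i 1 - pr i) \<bullet> b = 0)"
    using B(3) by metis
  define rr where "rr i = axis i 1 - pr i" for i
  have rrat: "rat_vec (rr i)" for i
    unfolding rr_def using pr[of i] by (intro rat_vec_diff) (auto simp: rat_vec_def axis_def)
  have rrL: "\<forall>y\<in>L. rr i \<bullet> y = 0" for i
    using pr[of i] orth_span B(3) unfolding rr_def by metis
  have affP2: "x \<in> affine hull P \<longleftrightarrow> (\<forall>i. rr i \<bullet> x = rr i \<bullet> q)" for x
  proof
    assume "x \<in> affine hull P"
    then have "x - q \<in> L" using affP by blast
    then show "\<forall>i. rr i \<bullet> x = rr i \<bullet> q" using rrL by (metis eq_iff_diff_eq_0 inner_diff_right)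
  next
    assume h: "\<forall>i. rr i \<bullet> x = rr i \<bullet> q"
    obtain y1 y2 where y: "y1 \<in> span L" "\<And>w. w \<in> span L \<Longrightarrow> orthogonal y2 w" "x - q = y1 + y2"
      using orthogonal_subspace_decomp_exists[of L "x - q"] by metis
    have sL: "span L = L" unfolding L_def by simp
    have "y2 $ i = 0" for i
    proof -
      have "rr i \<bullet> (x - q) = 0" using h by (simp add: inner_diff_right)
      moreover have "rr i \<bullet> y1 = 0" using rrL y(1) sL by auto
      ultimately have "rr i \<bullet> y2 = 0" using y(3) by (simp add: inner_add_right)
      moreover have "pr i \<bullet> y2 = 0" using y(2)[of "pr i"] pr[of i] sL
        by (simp add: orthogonal_def inner_commute)
      ultimately have "axis i 1 \<bullet> y2 = 0" unfolding rr_def by (simp add: inner_diff_left)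
      then show ?thesis by (simp add: inner_axis')
    qed
    then have "y2 = 0" by (simp add: vec_eq_iff)
    then have "x - q \<in> L" using y sL by simp
    then show "x \<in> affine hull P" using affP by blast
  qed
  have "\<exists>i. rr i \<noteq> 0"
  proof (rule ccontr)
    assume "\<not> (\<exists>i. rr i \<noteq> 0)"
    then have "affine hull P = UNIV" using affP2 by auto
    then have "aff_dim P = int CARD('n)" by (metis aff_dim_UNIV aff_dim_affine_hull DIM_cart DIM_real mult.right_neutral)
    then show False using dim by simp
  qed
  then obtain i0 where i0: "rr i0 \<noteq> 0" by blast
  define Geq where "Geq = (\<lambda>i. (rr i, rr i \<bullet> q)) ` UNIV \<union> (\<lambda>i. (- rr i, - (rr i \<bullet> q))) ` UNIV"
  have Geq_fin: "finite Geq" unfolding Geq_def by simp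
  have Geq_rat: "\<forall>(a,b)\<in>Geq. rat_vec a \<and> b \<in> \<rat>"
    unfolding Geq_def using rrat rat_vec_inner[OF rrat int_vec_rat_vec[OF qint]]
    by (auto simp: rat_vec_neg)
  have Geq_char: "(\<forall>(a,b)\<in>Geq. a \<bullet> x \<le> b) \<longleftrightarrow> x \<in> affine hull P" for x
  proof -
    have "(\<forall>(a,b)\<in>Geq. a \<bullet> x \<le> b) \<longleftrightarrow> (\<forall>i. rr i \<bullet> x \<le> rr i \<bullet> q \<and> - rr i \<bullet> x \<le> - (rr i \<bullet> q))"
    proof
      assume H: "\<forall>(a,b)\<in>Geq. a \<bullet> x \<le> b"
      show "\<forall>i. rr i \<bullet> x \<le> rr i \<bullet> q \<and> - rr i \<bullet> x \<le> - (rr i \<bullet> q)"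
      proof
        fix i
        have "(rr i, rr i \<bullet> q) \<in> Geq" "(- rr i, - (rr i \<bullet> q)) \<in> Geq" unfolding Geq_def by auto
        then show "rr i \<bullet> x \<le> rr i \<bullet> q \<and> - rr i \<bullet> x \<le> - (rr i \<bullet> q)" using H by fastforce
      qed
    qed (auto simp: Geq_def)
    also have "\<dots> \<longleftrightarrow> (\<forall>i. rr i \<bullet> x = rr i \<bullet> q)" 
    proof (intro iffI allI)
      fix i assume "\<forall>i. rr i \<bullet> x \<le> rr i \<bullet> q \<and> - rr i \<bullet> x \<le> - (rr i \<bullet> q)"
      then have "rr i \<bullet> x \<le> rr i \<bullet> q" "- rr i \<bullet> x \<le> - (rr i \<bullet> q)" by auto
      then show "rr i \<bullet> x = rr i \<bullet> q" by simp
    next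
      fix i assume "\<forall>i. rr i \<bullet> x = rr i \<bullet> q"
      then have "rr i \<bullet> x = rr i \<bullet> q" by blast
      then show "rr i \<bullet> x \<le> rr i \<bullet> q \<and> - rr i \<bullet> x \<le> - (rr i \<bullet> q)" by simp
    qed
    finally show ?thesis using affP2 by simp
  qed
  obtain F where F: "finite F" "P = affine hull P \<inter> \<Inter>F"
      "\<forall>h\<in>F. \<exists>a b. a \<noteq> 0 \<and> h = {x. a \<bullet> x \<le> b} \<and> (\<forall>x\<in>affine hull P. x + a \<in> affine hull P)"
      "\<forall>F'. F' \<subset> F \<longrightarrow> P \<subset> affine hull P \<inter> \<Inter>F'"
    using poly unfolding polyhedron_Int_affine_parallel_minimal by blast
  obtain ah bh where abh: "\<And>h. h \<in> F \<Longrightarrow> ah h \<noteq> 0 \<and> h = {x. ah h \<bullet> x \<le> bh h} \<and> (\<forall>x\<in>affine hull P. x + ah h \<in> affine hull P)"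
    using F(3) by metis
  have facet: "(P \<inter> {x. ah h \<bullet> x = bh h}) facet_of P" if "h \<in> F" for h
    using facet_of_polyhedron_explicit[OF F(1) F(2), of ah bh] abh F(4) that by blast
  have ahL: "ah h \<in> L" if "h \<in> F" for h
  proof -
    have "q \<in> affine hull P" unfolding PS using q by (simp add: hull_inc)
    then have "q + ah h \<in> affine hull P" using abh that by blast
    then show ?thesis using affP by simp
  qed
  have "\<forall>h\<in>F. \<exists>a' b' lam. rat_vec a' \<and> b' \<in> \<rat> \<and> lam > 0 \<and> (\<forall>x. a' \<bullet> x - b' = lam * (ah h \<bullet> x - bh h))"
  proof
    fix h assume h: "h \<in> F"
    show "\<exists>a' b' lam. rat_vec a' \<and> b' \<in> \<rat> \<and> lam > 0 \<and> (\<forall>x. a' \<bullet> x - b' = lam * (ah h \<bullet> x - bh h))"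
      by (rule facet_rat[OF PS Sint q L_def B facet[OF h] _ ahL[OF h]]) (use abh h in auto)
  qed
  then obtain A' B' Lm where AB: "\<And>h. h \<in> F \<Longrightarrow> rat_vec (A' h) \<and> B' h \<in> \<rat> \<and> Lm h > 0 \<and>
      (\<forall>x. A' h \<bullet> x - B' h = Lm h * (ah h \<bullet> x - bh h))"
    by metis
  define Gin where "Gin = (\<lambda>h. (A' h, B' h)) ` F"
  have Gin_fin: "finite Gin" unfolding Gin_def using F(1) by simp
  have Gin_rat: "\<forall>(a,b)\<in>Gin. rat_vec a \<and> b \<in> \<rat>" unfolding Gin_def using AB by auto
  have AB_le: "A' h \<bullet> x \<le> B' h \<longleftrightarrow> ah h \<bullet> x \<le> bh h" if "h \<in> F" for h x
  proof -
    have "A' h \<bullet> x - B' h = Lm h * (ah h \<bullet> x - bh h)" "Lm h > 0" using AB[OF that] by auto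
    then have "A' h \<bullet> x \<le> B' h \<longleftrightarrow> Lm h * (ah h \<bullet> x - bh h) \<le> Lm h * 0" by (simp only: mult_zero_right) linarith
    also have "\<dots> \<longleftrightarrow> ah h \<bullet> x - bh h \<le> 0" using \<open>Lm h > 0\<close> by (rule mult_le_cancel_left_pos)
    finally show ?thesis by simp
  qed
  have AB_lt: "A' h \<bullet> x < B' h \<longleftrightarrow> ah h \<bullet> x < bh h" if "h \<in> F" for h x
  proof -
    have "A' h \<bullet> x - B' h = Lm h * (ah h \<bullet> x - bh h)" "Lm h > 0" using AB[OF that] by auto
    then have "A' h \<bullet> x < B' h \<longleftrightarrow> Lm h * (ah h \<bullet> x - bh h) < Lm h * 0" by (simp only: mult_zero_right) linarith
    also have "\<dots> \<longleftrightarrow> ah h \<bullet> x - bh h < 0" using \<open>Lm h > 0\<close> by (rule mult_less_cancel_left_pos)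
    finally show ?thesis by simp
  qed
  have Pdesc: "P = {x. \<forall>(a,b)\<in>Geq \<union> Gin. a \<bullet> x \<le> b}"
  proof -
    have "x \<in> P \<longleftrightarrow> x \<in> affine hull P \<and> (\<forall>h\<in>F. ah h \<bullet> x \<le> bh h)" for x
      using F(2) abh by blast
    moreover have "(\<forall>(a,b)\<in>Gin. a \<bullet> x \<le> b) \<longleftrightarrow> (\<forall>h\<in>F. ah h \<bullet> x \<le> bh h)" for x
      unfolding Gin_def using AB_le by auto
    moreover have "(\<forall>(a,b)\<in>Geq \<union> Gin. a \<bullet> x \<le> b) \<longleftrightarrow> (\<forall>(a,b)\<in>Geq. a \<bullet> x \<le> b) \<and> (\<forall>(a,b)\<in>Gin. a \<bullet> x \<le> b)" for x
      by blast
    ultimately show ?thesis using Geq_char by auto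
  qed
  have "\<forall>h\<in>F. \<exists>p\<in>S. ah h \<bullet> p < bh h"
  proof
    fix h assume h: "h \<in> F"
    show "\<exists>p\<in>S. ah h \<bullet> p < bh h"
    proof (rule ccontr)
      assume "\<not> (\<exists>p\<in>S. ah h \<bullet> p < bh h)"
      moreover have "\<forall>p\<in>S. ah h \<bullet> p \<le> bh h"
        using F(2) abh[OF h] h PS hull_subset[of S convex] by blast
      ultimately have "S \<subseteq> {x. ah h \<bullet> x = bh h}" by force
      then have "P \<subseteq> {x. ah h \<bullet> x = bh h}" unfolding PS
        by (intro hull_minimal) (auto simp: convex_hyperplane)
      then have "P \<inter> {x. ah h \<bullet> x = bh h} = P" by blast
      then show False using facet[OF h] unfolding facet_of_def by simp
    qed
  qed
  then obtain ph where ph: "\<And>h. h \<in> F \<Longrightarrow> ph h \<in> S \<and> ah h \<bullet> ph h < bh h" by metis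
  have SP: "S \<subseteq> P" unfolding PS by (rule hull_subset)
  have convP: "convex P" using poly by (rule polyhedron_imp_convex)
  have PF: "\<And>h x. h \<in> F \<Longrightarrow> x \<in> P \<Longrightarrow> ah h \<bullet> x \<le> bh h" using F(2) abh by blast
  obtain z where z: "rat_vec z" "z \<in> P" "\<forall>h\<in>F. ah h \<bullet> z < bh h"
  proof (cases "F = {}")
    case True
    then show ?thesis using that[of q] qint q SP by (auto intro: int_vec_rat_vec)
  next
    case False
    define c where "c = 1 / real (card F)"
    have cpos: "c > 0" unfolding c_def using False F(1) by (simp add: card_gt_0_iff)
    define z where "z = (\<Sum>h\<in>F. c *\<^sub>R ph h)"
    have cQ: "c \<in> \<rat>" unfolding c_def by simp
    have phr: "rat_vec (ph h)" if "h \<in> F" for h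
      using ph[OF that] Sint unfolding int_points_def by (blast intro: int_vec_rat_vec)
    have "rat_vec z" unfolding z_def using F(1)
      by (intro rat_vec_sum) (auto intro!: rat_vec_scale cQ phr)
    moreover have "z \<in> P" unfolding z_def
    proof (rule convex_sum[OF F(1) convP])
      show "(\<Sum>i\<in>F. c) = 1" using False F(1) by (simp add: c_def)
      show "\<And>i. i \<in> F \<Longrightarrow> 0 \<le> c" using cpos by simp
      show "\<And>i. i \<in> F \<Longrightarrow> ph i \<in> P" using ph SP by blast
    qed
    moreover have "ah h \<bullet> z < bh h" if h: "h \<in> F" for h
    proof -
      have "ah h \<bullet> z = (\<Sum>h'\<in>F. c * (ah h \<bullet> ph h'))" unfolding z_def by (simp add: inner_sum_right)
      also have "\<dots> < (\<Sum>h'\<in>F. c * bh h)"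
      proof (rule sum_strict_mono_ex1[OF F(1)])
        show "\<forall>x\<in>F. c * (ah h \<bullet> ph x) \<le> c * bh h"
          using PF[OF h] ph SP cpos by (auto intro!: mult_left_mono)
        show "\<exists>a\<in>F. c * (ah h \<bullet> ph a) < c * bh h"
          using ph[OF h] cpos h by auto
      qed
      also have "\<dots> = bh h" using False F(1) by (simp add: c_def)
      finally show ?thesis .
    qed
    ultimately show ?thesis using that by blast
  qed
  show ?thesis
  proof (intro exI conjI)
    show "finite Geq" "finite Gin" by fact+
    show "\<forall>(a,b)\<in>Geq \<union> Gin. rat_vec a \<and> b \<in> \<rat>" using Geq_rat Gin_rat by blast
    show "P = {x. \<forall>(a,b)\<in>Geq \<union> Gin. a \<bullet> x \<le> b}" by (rule Pdesc)
    show "\<forall>(a,b)\<in>Geq. \<forall>x\<in>affine hull P. a \<bullet> x \<le> b" using Geq_char by blast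
    show "rat_vec z" "z \<in> P" by (fact z(1), fact z(2))
    show "\<forall>(a,b)\<in>Gin. a \<bullet> z < b" using z(3) AB_lt unfolding Gin_def by auto
    show "rat_vec (rr i0)" "rr i0 \<noteq> 0" by (fact rrat, fact i0)
    show "\<forall>x\<in>P. rr i0 \<bullet> x = rr i0 \<bullet> q" using affP2 hull_subset[of P affine] by blast
  qed
qed

theorem theorem2:
  fixes P :: "(real^'n) set"
  assumes "integral_polyhedron P"
    and "P \<noteq> {}"
    and "aff_dim P < int CARD('n)"
    and "rel_interior P \<inter> int_points = {}"
  shows "\<forall>k::nat. \<exists>Q. relaxation P Q \<and> \<not> (cg_iter k Q \<subseteq> affine hull P)"
proof
  fix k :: nat
  have poly: "polyhedron P" and intP: "P = integer_hull P"
    using assms(1) unfolding integral_polyhedron_def by auto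
  define S where "S = P \<inter> int_points"
  have PS: "P = convex hull S" using intP unfolding integer_hull_def S_def .
  have Sint: "S \<subseteq> int_points" unfolding S_def by blast
  obtain q where q: "q \<in> S" using assms(2) PS by fastforce
  have qint: "int_vec q" using q Sint unfolding int_points_def by blast
  obtain Geq Gin z r where R: "finite Geq" "finite Gin" "\<forall>(a,b)\<in>Geq \<union> Gin. rat_vec a \<and> b \<in> \<rat>"
     "P = {x. \<forall>(a,b)\<in>Geq \<union> Gin. a \<bullet> x \<le> b}"
     "\<forall>(a,b)\<in>Geq. \<forall>x\<in>affine hull P. a \<bullet> x \<le> b"
     "rat_vec z" "z \<in> P" "\<forall>(a,b)\<in>Gin. a \<bullet> z < b"
     "rat_vec r" "r \<noteq> 0" "\<forall>x\<in>P. r \<bullet> x = r \<bullet> q"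
    using rational_description[OF poly PS Sint q assms(3)] by blast
  obtain g w c where gw: "int_vec g" "int_vec w" "g \<bullet> w = 1" "c \<noteq> 0" "g = c *\<^sub>R r"
    using primitive_rat[OF R(9,10)] by blast
  define g0 where "g0 = g \<bullet> q"
  have g0Z: "g0 \<in> \<int>" unfolding g0_def using int_vec_inner[OF gw(1) qint] .
  have gP: "\<forall>x\<in>P. g \<bullet> x = g0" unfolding g0_def gw(5) using R(11) by simp
  have gaff: "\<forall>x\<in>affine hull P. g \<bullet> x = g0"
  proof -
    have "affine hull P \<subseteq> {x. g \<bullet> x = g0}"
      using gP by (intro hull_minimal) (auto simp: affine_hyperplane)
    then show ?thesis by blast
  qed
  define s where "s = real (Suc k)"
  have s0: "s > 0" unfolding s_def by simp
  define v where "v = z + s *\<^sub>R w"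
  define G where "G = Geq \<union> Gin"
  have Gfin: "finite G" unfolding G_def using R(1,2) by simp
  have Grat: "\<forall>(a,b)\<in>G. rat_vec a \<and> b \<in> \<rat>" unfolding G_def using R(3) by blast
  have vrat: "rat_vec v" unfolding v_def s_def
    using R(6) int_vec_rat_vec[OF gw(2)] by (intro rat_vec_add rat_vec_scale) auto
  define FQ where "FQ = {(- (1/s) *\<^sub>R g, - (g0/s)), ((1/s) *\<^sub>R g, 1 + g0/s)} \<union>
      (\<lambda>(a,b). (a - ((a \<bullet> v - b)/s) *\<^sub>R g, b - ((a \<bullet> v - b)/s) * g0)) ` G"
  define Q where "Q = {x. \<forall>(a,b)\<in>FQ. a \<bullet> x \<le> b}"
  have Qchar: "x \<in> Q \<longleftrightarrow> 0 \<le> g \<bullet> x - g0 \<and> g \<bullet> x - g0 \<le> s \<and>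
      (\<forall>(a,b)\<in>G. a \<bullet> x \<le> b + ((g \<bullet> x - g0)/s) * (a \<bullet> v - b))" for x
  proof -
    have e1: "(- (1/s) *\<^sub>R g) \<bullet> x \<le> - (g0/s) \<longleftrightarrow> 0 \<le> g \<bullet> x - g0"
      using s0 by (simp add: field_simps)
    have e2: "((1/s) *\<^sub>R g) \<bullet> x \<le> 1 + g0/s \<longleftrightarrow> g \<bullet> x - g0 \<le> s"
      using s0 by (simp add: field_simps)
    have e3: "(a - ((a \<bullet> v - b)/s) *\<^sub>R g) \<bullet> x \<le> b - ((a \<bullet> v - b)/s) * g0 \<longleftrightarrow>
              a \<bullet> x \<le> b + ((g \<bullet> x - g0)/s) * (a \<bullet> v - b)" for a b
    proof -
      have i1: "(a - ((a \<bullet> v - b)/s) *\<^sub>R g) \<bullet> x = a \<bullet> x - ((a \<bullet> v - b)/s) * (g \<bullet> x)"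
        by (simp add: inner_diff_left)
      have i2: "((a \<bullet> v - b)/s) * (g \<bullet> x) - ((a \<bullet> v - b)/s) * g0 = ((g \<bullet> x - g0)/s) * (a \<bullet> v - b)"
        using s0 by (simp add: field_simps)
      show ?thesis unfolding i1 using i2 by linarith
    qed
    show ?thesis unfolding Q_def FQ_def using e1 e2 e3 by auto
  qed
  have ratQ: "rational_polyhedron Q"
    unfolding rational_polyhedron_def
  proof (intro exI conjI)
    show "finite FQ" unfolding FQ_def using Gfin by simp
    show "Q = {x. \<forall>(a,b)\<in>FQ. a \<bullet> x \<le> b}" by (rule Q_def)
    have sQ: "s \<in> \<rat>" unfolding s_def by simp
    have gr: "rat_vec g" using gw(1) by (rule int_vec_rat_vec)
    have g0Q: "g0 \<in> \<rat>" using g0Z Ints_subset_Rats by blast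
    have "\<forall>(a,b)\<in>FQ. rat_vec a \<and> b \<in> \<rat>"
    proof
      fix p assume "p \<in> FQ"
      then consider "p = (- (1/s) *\<^sub>R g, - (g0/s))" | "p = ((1/s) *\<^sub>R g, 1 + g0/s)"
        | a b where "(a,b) \<in> G" "p = (a - ((a \<bullet> v - b)/s) *\<^sub>R g, b - ((a \<bullet> v - b)/s) * g0)"
        unfolding FQ_def by auto
      then show "case p of (a,b) \<Rightarrow> rat_vec a \<and> b \<in> \<rat>"
      proof cases
        case 1 then show ?thesis using sQ gr g0Q by (auto intro!: rat_vec_neg rat_vec_scale)
      next
        case 2 then show ?thesis using sQ gr g0Q by (auto intro!: rat_vec_scale)
      next
        case (3 a b)
        then have ab: "rat_vec a" "b \<in> \<rat>" using Grat by auto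
        have "(a \<bullet> v - b)/s \<in> \<rat>" using rat_vec_inner[OF ab(1) vrat] ab(2) sQ by simp
        moreover have "b - ((a \<bullet> v - b)/s) * g0 \<in> \<rat>" using calculation ab(2) g0Q by (intro Rats_diff Rats_mult)
        ultimately show ?thesis using 3 ab gr by (simp only: prod.case) (auto intro!: rat_vec_diff rat_vec_scale)
      qed
    qed
    then show "\<forall>(a,b)\<in>FQ. (\<forall>i. a $ i \<in> \<rat>) \<and> b \<in> \<rat>" unfolding rat_vec_def by blast
  qed
  have convQ: "convex Q"
  proof -
    have "Q = \<Inter>((\<lambda>(a,b). {x. a \<bullet> x \<le> b}) ` FQ)" unfolding Q_def by auto
    then show ?thesis by (auto intro!: convex_Inter simp: convex_halfspace_le)
  qed
  have PG: "x \<in> P \<longleftrightarrow> (\<forall>(a,b)\<in>G. a \<bullet> x \<le> b)" for x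
    using R(4) unfolding G_def by blast
  have PQ: "P \<subseteq> Q"
  proof
    fix x assume x: "x \<in> P"
    then show "x \<in> Q" unfolding Qchar using gP PG s0 by auto
  qed
  have zP: "z \<in> P" by (rule R(7))
  have zG: "a \<bullet> z \<le> b" if "(a,b) \<in> G" for a b using zP PG that by blast
  have vQ: "v \<in> Q"
  proof -
    have "g \<bullet> v - g0 = s" unfolding v_def using gP zP gw(3) by (simp add: inner_add_right)
    then show ?thesis unfolding Qchar using s0 by auto
  qed
  have relax: "Q \<inter> int_points = P \<inter> int_points"
  proof
    show "P \<inter> int_points \<subseteq> Q \<inter> int_points" using PQ by blast
    show "Q \<inter> int_points \<subseteq> P \<inter> int_points"
    proof
      fix x assume x: "x \<in> Q \<inter> int_points"
      then have xQ: "x \<in> Q" and xi: "int_vec x" unfolding int_points_def by auto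
      define m where "m = g \<bullet> x - g0"
      have mZ: "m \<in> \<int>" unfolding m_def using int_vec_inner[OF gw(1) xi] g0Z by simp
      have m0: "m \<ge> 0" and xG: "\<forall>(a,b)\<in>G. a \<bullet> x \<le> b + (m/s) * (a \<bullet> v - b)"
        using xQ unfolding Qchar m_def by auto
      show "x \<in> P \<inter> int_points"
      proof (cases "m = 0")
        case True
        then have "x \<in> P" using xG PG by auto
        then show ?thesis using x by blast
      next
        case False
        then have mpos: "m > 0" using m0 by simp
        define y where "y = x - m *\<^sub>R w"
        have yi: "int_vec y" unfolding y_def using xi gw(2) mZ by (intro int_vec_diff int_vec_scale)
        have yG: "a \<bullet> y \<le> b + (m/s) * (a \<bullet> z - b)" if "(a,b) \<in> G" for a b
        proof -
          have "a \<bullet> x \<le> b + (m/s) * (a \<bullet> v - b)" using xG that by blast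
          moreover have "(m/s) * (a \<bullet> v - b) = (m/s) * (a \<bullet> z - b) + m * (a \<bullet> w)"
            unfolding v_def using s0 by (simp add: inner_add_right field_simps)
          ultimately show ?thesis unfolding y_def by (simp add: inner_diff_right)
        qed
        have yP: "y \<in> P"
          unfolding PG
        proof (clarify)
          fix a b assume ab: "(a,b) \<in> G"
          have "(m/s) * (a \<bullet> z - b) \<le> 0" using zG[OF ab] mpos s0
            by (intro mult_nonneg_nonpos) auto
          then show "a \<bullet> y \<le> b" using yG[OF ab] by linarith
        qed
        have yGin: "\<forall>(a,b)\<in>Gin. a \<bullet> y < b"
        proof (clarify)
          fix a b assume ab: "(a,b) \<in> Gin"
          have "a \<bullet> z < b" using R(8) ab by blast
          then have "(m/s) * (a \<bullet> z - b) < 0" using mpos s0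
            by (intro mult_pos_neg) auto
          then show "a \<bullet> y < b" using yG[of a b] ab unfolding G_def by fastforce
        qed
        define T where "T = \<Inter>((\<lambda>(a,b). {u. a \<bullet> u < b}) ` Gin)"
        have oT: "open T" unfolding T_def using R(2)
          by (intro open_Inter) (auto simp: open_halfspace_lt)
        have yT: "y \<in> T" unfolding T_def using yGin by auto
        have TP: "T \<inter> affine hull P \<subseteq> P"
        proof
          fix u assume u: "u \<in> T \<inter> affine hull P"
          have "\<forall>(a,b)\<in>Gin. a \<bullet> u \<le> b" using u unfolding T_def by fastforce
          moreover have "\<forall>(a,b)\<in>Geq. a \<bullet> u \<le> b" using u R(5) by blast
          ultimately show "u \<in> P" unfolding PG G_def by blast
        qed
        have "y \<in> rel_interior P" unfolding mem_rel_interior using oT yT yP TP by blast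
        moreover have "y \<in> int_points" using yi unfolding int_points_def by simp
        ultimately show ?thesis using assms(4) by blast
      qed
    qed
  qed
  have zs: "z + real (Suc k) *\<^sub>R w \<in> Q" using vQ unfolding v_def s_def .
  have "z + real (Suc k - k) *\<^sub>R w \<in> cg_iter k Q"
    using cg_iter_main[OF intP convQ PQ zP gw(2) zs, of k] by simp
  then have zw: "z + w \<in> cg_iter k Q" by simp
  have "z + w \<notin> affine hull P"
  proof
    assume "z + w \<in> affine hull P"
    then have "g \<bullet> (z + w) = g0" using gaff by blast
    then show False using gP zP gw(3) by (simp add: inner_add_right)
  qed
  then show "\<exists>Q. relaxation P Q \<and> \<not> (cg_iter k Q \<subseteq> affine hull P)"
    using zw ratQ relax unfolding relaxation_def by blast
qed

end
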